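(* The assignment $\Xi$ is a functor from the category $\mathfrak{S}$ of Bochvar systems to the category $\mathfrak{B}$ of Bochvar algebras. It sends a Bochvar system $\mathbb{B}$ to $\mathbf{A}_{\mathbb{B}}$, and a morphism $g:\langle\mathbf{B}_1,\mathbf{I}_1\rangle\to\langle\mathbf{B}_2,\mathbf{I}_2\rangle$ to the map $\Xi(g)(a/[i))=g(a)/[g(i))$ for $a\in B_1$, $i\in I_1$. In particular, $\Xi(g)$ is a well-defined homomorphism of Bochvar algebras $\mathbf{A}_{\mathbb{B}_1}\to\mathbf{A}_{\mathbb{B}_2}$.
   Context: A Bochvar system is a pair $\langle\mathbf{B},\mathbf{I}\rangle$ with $\mathbf{B}$ a Boolean algebra and $I\subseteq B$ containing $1$ and closed under $\wedge$. A morphism $\langle\mathbf{B}_1,\mathbf{I}_1\rangle\to\langle\mathbf{B}_2,\mathbf{I}_2\rangle$ is a Boolean homomorphism $g$ with $g(I_1)\subseteq I_2$. $\mathbf{WK}^e$ is the three-element algebra on $\{0,\tfrac12,1\}$ of type $\langle\wedge,\vee,\neg,J_2,0,1\rangle$. Its operations are: - $\neg$ swaps $0,1$ and fixes $\tfrac12$; - $\wedge,\vee$ are Boolean on $\{0,1\}$ and return $\tfrac12$ if some argument is $\tfrac12$; - $J_2(1)=1$ and $J_2(\tfrac12)=J_2(0)=0$. Bochvar algebras are the members of $ISP(\mathbf{WK}^e)$. For a Bochvar system $\mathbb{B}=\langle\mathbf{B},\mathbf{I}\rangle$, $\mathbf{A}_{\mathbb{B}}$ is the unique Bochvar algebra whose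 $\{\wedge,\vee,\neg,0,1\}$-reduct is the Płonka sum of the following system: - index join-semilattice $I$ ordered dually to $\mathbf{B}$; - fibres $\mathbf{B}/[i)$, the quotient of $\mathbf{B}$ by the congruence of the principal filter $[i)$; - maps $p_{ij}(a/[i))=a/[j)$ for $j\le_{\mathbf{B}}i$. In a Płonka sum, operations are computed by mapping the arguments via the $p_{ij}$ into the fibre indexed by the join of their indices. $J_2$ sends $a/[i)$ to the unique element of the bottom fibre $\mathbf{B}/[1)\cong\mathbf{B}$ below $i$ that is congruent to $a$ modulo $[i)$. *)

theory Defs
  imports Main
begin

text \<open>Boolean algebras are the instances of the type class boolean_algebra.
 A Bochvar system is a pair (B, I) with B a Boolean algebra (a type) and I a subset
 containing top and closed under meet.\<close>

definition bochvar_system :: "'a::boolean_algebra set \<Rightarrow> bool" where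
  "bochvar_system I \<longleftrightarrow> top \<in> I \<and> (\<forall>x\<in>I. \<forall>y\<in>I. inf x y \<in> I)"

definition bool_hom :: "('a::boolean_algebra \<Rightarrow> 'b::boolean_algebra) \<Rightarrow> bool" where
  "bool_hom g \<longleftrightarrow> (\<forall>x y. g (inf x y) = inf (g x) (g y)) \<and> (\<forall>x y. g (sup x y) = sup (g x) (g y))
     \<and> (\<forall>x. g (- x) = - g x) \<and> g bot = bot \<and> g top = top"

definition sys_morphism :: "'a::boolean_algebra set \<Rightarrow> 'b::boolean_algebra set \<Rightarrow> ('a \<Rightarrow> 'b) \<Rightarrow> bool" where
  "sys_morphism I1 I2 g \<longleftrightarrow> bool_hom g \<and> g ` I1 \<subseteq> I2"

definition pfilter :: "'a::boolean_algebra \<Rightarrow> 'a set" where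
  "pfilter i = {f. i \<le> f}"

definition fcong :: "'a::boolean_algebra set \<Rightarrow> 'a \<Rightarrow> 'a \<Rightarrow> bool" where
  "fcong F a b \<longleftrightarrow> (\<exists>f\<in>F. inf a f = inf b f)"

definition qcls :: "'a::boolean_algebra \<Rightarrow> 'a \<Rightarrow> 'a set" where
  "qcls i a = {b. fcong (pfilter i) a b}"

text \<open>Elements of A_B: pairs (i, a/[i)) with i in I (the fibre index and a class).\<close>

definition carrierA :: "'a::boolean_algebra set \<Rightarrow> ('a \<times> 'a set) set" where
  "carrierA I = {(i, qcls i a) | i a. i \<in> I}"

definition rep :: "'a set \<Rightarrow> 'a" where
  "rep x = (SOME a. a \<in> x)"

definition ptrans :: "'a::boolean_algebra \<Rightarrow> 'a set \<Rightarrow> 'a set" where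
  "ptrans j x = qcls j (rep x)"

text \<open>Join of indices in I ordered dually to B is the meet in B.\<close>
definition meetA :: "('a::boolean_algebra \<times> 'a set) \<Rightarrow> ('a \<times> 'a set) \<Rightarrow> ('a \<times> 'a set)" where
  "meetA p q = (let k = inf (fst p) (fst q) in
     (k, qcls k (inf (rep (ptrans k (snd p))) (rep (ptrans k (snd q))))))"

definition joinA :: "('a::boolean_algebra \<times> 'a set) \<Rightarrow> ('a \<times> 'a set) \<Rightarrow> ('a \<times> 'a set)" where
  "joinA p q = (let k = inf (fst p) (fst q) in
     (k, qcls k (sup (rep (ptrans k (snd p))) (rep (ptrans k (snd q))))))"

definition negA :: "('a::boolean_algebra \<times> 'a set) \<Rightarrow> ('a \<times> 'a set)" where
  "negA p = (fst p, qcls (fst p) (- rep (snd p)))"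

definition J2A :: "('a::boolean_algebra \<times> 'a set) \<Rightarrow> ('a \<times> 'a set)" where
  "J2A p = (top, qcls top (THE c. c \<le> fst p \<and> fcong (pfilter (fst p)) c (rep (snd p))))"

definition zeroA :: "'a::boolean_algebra \<times> 'a set" where
  "zeroA = (top, qcls top bot)"

definition oneA :: "'a::boolean_algebra \<times> 'a set" where
  "oneA = (top, qcls top top)"

definition homA :: "'a::boolean_algebra set \<Rightarrow> 'b::boolean_algebra set
    \<Rightarrow> (('a \<times> 'a set) \<Rightarrow> ('b \<times> 'b set)) \<Rightarrow> bool" where
  "homA I1 I2 h \<longleftrightarrow> (\<forall>p\<in>carrierA I1. h p \<in> carrierA I2)
    \<and> (\<forall>p\<in>carrierA I1. \<forall>q\<in>carrierA I1. h (meetA p q) = meetA (h p) (h q))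
    \<and> (\<forall>p\<in>carrierA I1. \<forall>q\<in>carrierA I1. h (joinA p q) = joinA (h p) (h q))
    \<and> (\<forall>p\<in>carrierA I1. h (negA p) = negA (h p))
    \<and> (\<forall>p\<in>carrierA I1. h (J2A p) = J2A (h p))
    \<and> h zeroA = zeroA \<and> h oneA = oneA"

definition Xi :: "('a::boolean_algebra \<Rightarrow> 'b::boolean_algebra) \<Rightarrow> ('a \<times> 'a set) \<Rightarrow> ('b \<times> 'b set)" where
  "Xi g p = (g (fst p), qcls (g (fst p)) (g (rep (snd p))))"

end

theory Submission
  imports Defs
begin

lemma fcong_p: "fcong (pfilter i) a b \<longleftrightarrow> inf a i = inf b i"
proof
  assume "fcong (pfilter i) a b"
  then obtain f where f: "i \<le> f" "inf a f = inf b f" by (auto simp: fcong_def pfilter_def)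
  then have "inf (inf a f) i = inf (inf b f) i" by simp
  then show "inf a i = inf b i" using f(1) by (metis inf.absorb_iff2 inf_assoc inf_commute)
next
  assume "inf a i = inf b i" then show "fcong (pfilter i) a b"
    by (auto simp: fcong_def pfilter_def)
qed

lemma qcls_eq: "qcls i a = {b. inf b i = inf a i}"
  unfolding qcls_def fcong_p by auto

lemma qcls_iff: "qcls i a = qcls i b \<longleftrightarrow> inf a i = inf b i"
  unfolding qcls_eq by auto

lemma rep_qcls: "inf (rep (qcls i a)) i = inf a i"
proof -
  have "a \<in> qcls i a" by (simp add: qcls_eq)
  then have "rep (qcls i a) \<in> qcls i a" unfolding rep_def by (rule someI)
  then show ?thesis by (simp add: qcls_eq)
qed

lemma ptrans_qcls: "k \<le> i \<Longrightarrow> ptrans k (qcls i a) = qcls k a"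
  unfolding ptrans_def qcls_iff
  by (metis inf.absorb_iff2 inf_assoc rep_qcls)

lemma rep_qcls_le: "k \<le> i \<Longrightarrow> inf (rep (ptrans k (qcls i a))) k = inf a k"
  by (simp add: ptrans_qcls rep_qcls)

lemma meetA_qcls: "meetA (i, qcls i a) (j, qcls j b) = (inf i j, qcls (inf i j) (inf a b))"
proof -
  let ?k = "inf i j"
  have 1: "inf (rep (ptrans ?k (qcls i a))) ?k = inf a ?k" by (rule rep_qcls_le) simp
  have 2: "inf (rep (ptrans ?k (qcls j b))) ?k = inf b ?k" by (rule rep_qcls_le) simp
  show ?thesis unfolding meetA_def Let_def using 1 2
    by (simp add: qcls_iff) (metis inf_assoc inf_commute inf_left_commute)
qed

lemma joinA_qcls: "joinA (i, qcls i a) (j, qcls j b) = (inf i j, qcls (inf i j) (sup a b))"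
proof -
  let ?k = "inf i j"
  have 1: "inf (rep (ptrans ?k (qcls i a))) ?k = inf a ?k" by (rule rep_qcls_le) simp
  have 2: "inf (rep (ptrans ?k (qcls j b))) ?k = inf b ?k" by (rule rep_qcls_le) simp
  show ?thesis unfolding joinA_def Let_def using 1 2
    by (simp add: qcls_iff inf_sup_distrib2)
qed

lemma negA_qcls: "negA (i, qcls i a) = (i, qcls i (- a))"
proof -
  have r: "inf (rep (qcls i a)) i = inf a i" by (rule rep_qcls)
  have "inf (- rep (qcls i a)) i = inf (- inf (rep (qcls i a)) i) i"
    by (simp add: inf_sup_distrib2)
  also have "\<dots> = inf (- inf a i) i" by (simp add: r)
  also have "\<dots> = inf (- a) i" by (simp add: inf_sup_distrib2)
  finally show ?thesis unfolding negA_def by (simp add: qcls_iff)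
qed

lemma J2A_qcls: "J2A (i, qcls i a) = (top, qcls top (inf a i))"
proof -
  have "(THE c. c \<le> i \<and> fcong (pfilter i) c (rep (qcls i a))) = inf a i"
  proof (rule the_equality)
    show "inf a i \<le> i \<and> fcong (pfilter i) (inf a i) (rep (qcls i a))"
      by (simp add: fcong_p rep_qcls inf_assoc)
  next
    fix c assume "c \<le> i \<and> fcong (pfilter i) c (rep (qcls i a))"
    then show "c = inf a i" by (simp add: fcong_p rep_qcls) (metis inf.absorb1)
  qed
  then show ?thesis unfolding J2A_def by simp
qed

lemma Xi_qcls:
  assumes "bool_hom g"
  shows "Xi g (i, qcls i a) = (g i, qcls (g i) (g a))"
proof -
  have "g (inf (rep (qcls i a)) i) = g (inf a i)" by (simp add: rep_qcls)
  then show ?thesis using assms unfolding Xi_def bool_hom_def by (simp add: qcls_iff)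
qed

lemma bh_comp: "bool_hom g \<Longrightarrow> bool_hom h \<Longrightarrow> bool_hom (h \<circ> g)"
  unfolding bool_hom_def by simp

lemma carrierA_E: "p \<in> carrierA I \<Longrightarrow> (\<And>i a. p = (i, qcls i a) \<Longrightarrow> i \<in> I \<Longrightarrow> P) \<Longrightarrow> P"
  unfolding carrierA_def by blast

theorem lemma3p8:
  fixes I1 :: "'a::boolean_algebra set" and I2 :: "'b::boolean_algebra set"
    and I3 :: "'c::boolean_algebra set"
    and g :: "'a \<Rightarrow> 'b" and h :: "'b \<Rightarrow> 'c"
  assumes "bochvar_system I1" and "bochvar_system I2" and "bochvar_system I3"
    and "sys_morphism I1 I2 g" and "sys_morphism I2 I3 h"
  shows "(\<forall>i\<in>I1. \<forall>a. Xi g (i, qcls i a) = (g i, qcls (g i) (g a)))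
    \<and> homA I1 I2 (Xi g)
    \<and> (\<forall>p\<in>carrierA I1. Xi (id :: 'a \<Rightarrow> 'a) p = p)
    \<and> (\<forall>p\<in>carrierA I1. Xi (h \<circ> g) p = Xi h (Xi g p))"
proof -
  have g: "bool_hom g" and gI: "g ` I1 \<subseteq> I2" using assms(4) by (auto simp: sys_morphism_def)
  have h: "bool_hom h" using assms(5) by (auto simp: sys_morphism_def)
  have idh: "bool_hom (id :: 'a \<Rightarrow> 'a)" by (simp add: bool_hom_def)
  have gi: "g (inf x y) = inf (g x) (g y)" "g (sup x y) = sup (g x) (g y)" "g (- x) = - g x"
    "g bot = bot" "g top = top" for x y using g by (auto simp: bool_hom_def)
  have hom: "homA I1 I2 (Xi g)"
    unfolding homA_def
  proof (intro conjI ballI)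
    fix p assume "p \<in> carrierA I1"
    then show "Xi g p \<in> carrierA I2"
      by (rule carrierA_E) (use gI in \<open>auto simp: Xi_qcls[OF g] carrierA_def\<close>)
  next
    fix p q assume "p \<in> carrierA I1" "q \<in> carrierA I1"
    then show "Xi g (meetA p q) = meetA (Xi g p) (Xi g q)"
      by (auto elim!: carrierA_E simp: Xi_qcls[OF g] meetA_qcls gi)
  next
    fix p q assume "p \<in> carrierA I1" "q \<in> carrierA I1"
    then show "Xi g (joinA p q) = joinA (Xi g p) (Xi g q)"
      by (auto elim!: carrierA_E simp: Xi_qcls[OF g] joinA_qcls gi)
  next
    fix p assume "p \<in> carrierA I1"
    then show "Xi g (negA p) = negA (Xi g p)"
      by (auto elim!: carrierA_E simp: Xi_qcls[OF g] negA_qcls gi)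
  next
    fix p assume "p \<in> carrierA I1"
    then show "Xi g (J2A p) = J2A (Xi g p)"
      by (auto elim!: carrierA_E simp: Xi_qcls[OF g] J2A_qcls gi)
  next
    show "Xi g zeroA = zeroA" unfolding zeroA_def by (simp add: Xi_qcls[OF g] gi)
  next
    show "Xi g oneA = oneA" unfolding oneA_def by (simp add: Xi_qcls[OF g] gi)
  qed
  show ?thesis
    using hom
    by (auto elim!: carrierA_E simp: Xi_qcls[OF g] Xi_qcls[OF idh] Xi_qcls[OF h]
        Xi_qcls[OF bh_comp[OF g h]])
qed

end
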